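(* Consider an instance of $\mathrm{BAL}(\mu,\nu)$ in the correlated setting. (1) If $\mathcal T^k\subseteq V\times\{0\}$ is a set of size $k$ maximizing $\Psi$ and $\mathcal S^k\subseteq\hat V$ is a set of size $k$ maximizing $\Phi^{\ge1}$, then $\Psi(\mathcal T^k)\ge\Phi^{\ge1}(\mathcal S^k)$. (2) Let $\varepsilon>0$ and $k\ge\nu/\varepsilon$. If $\mathcal T^k\subseteq V\times\{0\}$ is a set of size $k$ maximizing $\Psi$ and $\mathcal T^{\lfloor k/\nu\rfloor}\subseteq V\times\{0\}$ is a set of size $\lfloor k/\nu\rfloor$ maximizing $\Psi$, then $\Psi(\mathcal T^{\lfloor k/\nu\rfloor})\ge\frac{1-\varepsilon}{\nu+1}\Psi(\mathcal T^k)$. (3) Let $\mathcal T\subseteq V\times\{0\}$ be of size $\lfloor k/\nu\rfloor$. Then $\mathcal S'=\{(v,j):(v,0)\in\mathcal T,\ j\in[\nu]\}\subseteq\hat V$ has size at most $k$ and $\Phi^{\ge1}(\mathcal S')=\Psi(\mathcal T)$.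
   Context: Triggering model: for a directed graph $G=(V,E)$ and $p:E\to[0,1]$, an outcome $X=(T_v)_{v\in V}$ is obtained by having each node $v$ independently choose a subset $T_v$ of its in-neighbours $N_v$, with $T_v=S$ with probability $\prod_{u\in S}p_{uv}\prod_{u\in N_v\setminus S}(1-p_{uv})$; $\rho_X(A)$ is the set of nodes reachable from $A\subseteq V$ via arcs $\{(u,v):u\in T_v\}$. $\mathrm{BAL}(\mu,\nu)$ for integer constants $\mu\ge\nu\ge2$: instance = directed graph $G=(V,E)$, seed sets $\mathcal I=(I_1,\dots,I_\mu)$, budget $k\ge2$, and probability functions $p_1,\dots,p_\mu$; in the correlated setting $p_1=\dots=p_\mu=p$ and a single outcome $X$ w.r.t. $p$ is used by all campaigns (campaign $i$ reaches $v$ from seeds $A_i$ iff $v\in\rho_X(A_i)$). Let $\hat V=V\times[\mu]$; $\mathcal S\subseteq\hat V$ is identified with $(S_1,\dots,S_\mu)$, $S_i=\{v:(v,i)\in\mathcal S\}$. $V^j_X$ is the set of nodes reached by exactly $j$ campaigns from seeds $\mathcal I$. $\Phi^{\ge1}(\mathcal S)$ is the expected number of nodes $v\notin V^0_X$ reached by at least $\nu$ campaigns from seeds $(I_i\cup S_i)_i$ (equivalently, by none or at least $\nu$). For $\mathcal T\subseteq V\times\{0\}$ with underlying node set $T$, $\Psi(\mathcal T)=\mathbb E_X\big[\big|(\rho_X(T)\cap\bigcup_{j=1}^{\nu-1}V^j_X)\cup\bigcup_{j=\nu}^{\mu}V^j_X\big|\big]$. *)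

theory Defs
  imports Complex_Main
begin

text \<open>Triggering model on a finite directed graph (V,E) with arc probabilities p.
  Campaigns are indexed by 1..mu; seed sets are given by I :: nat => 'a set.\<close>

definition in_nbrs :: "('a \<times> 'a) set \<Rightarrow> 'a \<Rightarrow> 'a set" where
  "in_nbrs E v = {u. (u, v) \<in> E}"

definition outcomes :: "'a set \<Rightarrow> ('a \<times> 'a) set \<Rightarrow> ('a \<Rightarrow> 'a set) set" where
  "outcomes V E = {X. (\<forall>v\<in>V. X v \<subseteq> in_nbrs E v) \<and> (\<forall>v. v \<notin> V \<longrightarrow> X v = {})}"

definition outcome_prob :: "'a set \<Rightarrow> ('a \<times> 'a) set \<Rightarrow> ('a \<times> 'a \<Rightarrow> real) \<Rightarrow> ('a \<Rightarrow> 'a set) \<Rightarrow> real" where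
  "outcome_prob V E p X =
     (\<Prod>v\<in>V. \<Prod>u\<in>in_nbrs E v. if u \<in> X v then p (u, v) else 1 - p (u, v))"

definition expect :: "'a set \<Rightarrow> ('a \<times> 'a) set \<Rightarrow> ('a \<times> 'a \<Rightarrow> real) \<Rightarrow> (('a \<Rightarrow> 'a set) \<Rightarrow> real) \<Rightarrow> real" where
  "expect V E p f = (\<Sum>X\<in>outcomes V E. outcome_prob V E p X * f X)"

definition live_arcs :: "('a \<Rightarrow> 'a set) \<Rightarrow> ('a \<times> 'a) set" where
  "live_arcs X = {(u, v). u \<in> X v}"

definition reach :: "('a \<Rightarrow> 'a set) \<Rightarrow> 'a set \<Rightarrow> 'a set" where
  "reach X A = {v. \<exists>a\<in>A. (a, v) \<in> (live_arcs X)\<^sup>*}"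

definition n_reached :: "nat \<Rightarrow> ('a \<Rightarrow> 'a set) \<Rightarrow> (nat \<Rightarrow> 'a set) \<Rightarrow> 'a \<Rightarrow> nat" where
  "n_reached mu X A v = card {i \<in> {1..mu}. v \<in> reach X (A i)}"

definition Vj :: "'a set \<Rightarrow> nat \<Rightarrow> (nat \<Rightarrow> 'a set) \<Rightarrow> ('a \<Rightarrow> 'a set) \<Rightarrow> nat \<Rightarrow> 'a set" where
  "Vj V mu I X j = {v \<in> V. n_reached mu X I v = j}"

definition comp :: "('a \<times> nat) set \<Rightarrow> nat \<Rightarrow> 'a set" where
  "comp S i = {v. (v, i) \<in> S}"

definition Phi1 :: "'a set \<Rightarrow> ('a \<times> 'a) set \<Rightarrow> ('a \<times> 'a \<Rightarrow> real) \<Rightarrow> nat \<Rightarrow> nat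
                     \<Rightarrow> (nat \<Rightarrow> 'a set) \<Rightarrow> ('a \<times> nat) set \<Rightarrow> real" where
  "Phi1 V E p mu nu I S = expect V E p (\<lambda>X. real (card
      {v \<in> V. v \<notin> Vj V mu I X 0 \<and> nu \<le> n_reached mu X (\<lambda>i. I i \<union> comp S i) v}))"

definition Psi :: "'a set \<Rightarrow> ('a \<times> 'a) set \<Rightarrow> ('a \<times> 'a \<Rightarrow> real) \<Rightarrow> nat \<Rightarrow> nat
                     \<Rightarrow> (nat \<Rightarrow> 'a set) \<Rightarrow> ('a \<times> nat) set \<Rightarrow> real" where
  "Psi V E p mu nu I T = expect V E p (\<lambda>X. real (card
      ((reach X (fst ` T) \<inter> (\<Union>j\<in>{1..nu - 1}. Vj V mu I X j)) \<union> (\<Union>j\<in>{nu..mu}. Vj V mu I X j))))"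

end

theory Submission
  imports Defs
begin


lemma reach_Un: "reach X (A \<union> B) = reach X A \<union> reach X B"
  unfolding reach_def by auto
lemma reach_mono: "A \<subseteq> B \<Longrightarrow> reach X A \<subseteq> reach X B"
  unfolding reach_def by auto
lemma reach_UN: "reach X (\<Union>i\<in>K. A i) = (\<Union>i\<in>K. reach X (A i))"
  unfolding reach_def by auto
lemma Vj_sub: "Vj V mu I X j \<subseteq> V"
  unfolding Vj_def by auto
lemma n_reached_le: "n_reached mu X A v \<le> mu"
  unfolding n_reached_def
  by (rule order_trans[OF card_mono[of "{1..mu}"]]) auto

lemma prob_nonneg:
  assumes "\<forall>e\<in>E. 0 \<le> p e \<and> p e \<le> 1"
  shows "0 \<le> outcome_prob V E p X"
  unfolding outcome_prob_def
  using assms by (auto intro!: prod_nonneg simp: in_nbrs_def)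

lemma expect_mono:
  assumes "\<forall>e\<in>E. 0 \<le> p e \<and> p e \<le> 1" "\<And>X. X \<in> outcomes V E \<Longrightarrow> f X \<le> g X"
  shows "expect V E p f \<le> expect V E p g"
  unfolding expect_def
  by (rule sum_mono, rule mult_left_mono) (use assms prob_nonneg in auto)

lemma expect_sum:
  "expect V E p (\<lambda>X. \<Sum>i\<in>K. f i X) = (\<Sum>i\<in>K. expect V E p (f i))"
  unfolding expect_def by (simp add: sum_distrib_left) (rule sum.swap)

lemma expect_cmult:
  "expect V E p (\<lambda>X. c * f X) = c * expect V E p f"
  unfolding expect_def by (simp add: sum_distrib_left mult.left_commute)

lemma Psi_nonneg:
  assumes "\<forall>e\<in>E. 0 \<le> p e \<and> p e \<le> 1"
  shows "0 \<le> Psi V E p mu nu I T"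
  unfolding Psi_def expect_def using prob_nonneg[OF assms]
  by (auto intro!: sum_nonneg)

lemma mono_card_abs:
  assumes "finite V" "R \<subseteq> R'" "A \<subseteq> V" "B \<subseteq> V"
  shows "real (card ((R \<inter> B) \<union> A)) \<le> real (card ((R' \<inter> B) \<union> A))"
proof -
  have sub: "(R \<inter> B) \<union> A \<subseteq> (R' \<inter> B) \<union> A" using assms(2) by blast
  have "(R' \<inter> B) \<union> A \<subseteq> V" using assms(3,4) by blast
  then have fin: "finite ((R' \<inter> B) \<union> A)" using assms(1) by (rule finite_subset)
  show ?thesis using card_mono[OF fin sub] by (rule of_nat_mono)
qed

lemma cover_card_abs:
  assumes "finite V" "finite K" "K \<noteq> {}" "R \<subseteq> (\<Union>i\<in>K. R' i)" "A \<subseteq> V" "B \<subseteq> V"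
  shows "real (card ((R \<inter> B) \<union> A)) \<le> (\<Sum>i\<in>K. real (card ((R' i \<inter> B) \<union> A)))"
proof -
  have sub: "(R \<inter> B) \<union> A \<subseteq> (\<Union>i\<in>K. (R' i \<inter> B) \<union> A)" using assms(3,4) by blast
  have "(\<Union>i\<in>K. (R' i \<inter> B) \<union> A) \<subseteq> V" using assms(5,6) by blast
  then have fin: "finite (\<Union>i\<in>K. (R' i \<inter> B) \<union> A)" using assms(1) by (rule finite_subset)
  have "card ((R \<inter> B) \<union> A) \<le> card (\<Union>i\<in>K. (R' i \<inter> B) \<union> A)" by (rule card_mono[OF fin sub])
  also have "\<dots> \<le> (\<Sum>i\<in>K. card ((R' i \<inter> B) \<union> A))" by (rule card_UN_le[OF assms(2)])
  finally have "real (card ((R \<inter> B) \<union> A)) \<le> real (\<Sum>i\<in>K. card ((R' i \<inter> B) \<union> A))"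
    by (rule of_nat_mono)
  then show ?thesis unfolding of_nat_sum .
qed

lemma UVj_sub: "(\<Union>j\<in>J. Vj V mu I X j) \<subseteq> V"
  unfolding Vj_def by auto

lemma Psi_mono:
  assumes "finite V" "\<forall>e\<in>E. 0 \<le> p e \<and> p e \<le> 1" "fst ` T \<subseteq> fst ` T'"
  shows "Psi V E p mu nu I T \<le> Psi V E p mu nu I T'"
  unfolding Psi_def
  apply (rule expect_mono[OF assms(2)])
  apply (rule mono_card_abs[OF assms(1) reach_mono[OF assms(3)] UVj_sub UVj_sub])
  done

lemma Psi_cover:
  assumes "finite V" "\<forall>e\<in>E. 0 \<le> p e \<and> p e \<le> 1" "finite K" "K \<noteq> {}"
    "fst ` T \<subseteq> (\<Union>i\<in>K. fst ` P i)"
  shows "Psi V E p mu nu I T \<le> (\<Sum>i\<in>K. Psi V E p mu nu I (P i))"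
proof -
  have R: "reach X (fst ` T) \<subseteq> (\<Union>i\<in>K. reach X (fst ` P i))" for X
    using reach_mono[OF assms(5), of X] unfolding reach_UN .
  show ?thesis
    unfolding Psi_def expect_sum[symmetric]
    apply (rule expect_mono[OF assms(2)])
    apply (rule cover_card_abs[OF assms(1,3,4) R UVj_sub UVj_sub])
    done
qed

lemma n_reached_same:
  assumes "\<And>i. i \<in> {1..mu} \<Longrightarrow> (v \<in> reach X (A i)) = (v \<in> reach X (B i))"
  shows "n_reached mu X A v = n_reached mu X B v"
  unfolding n_reached_def using assms by (metis (no_types, lifting) Collect_cong)

lemma Phi1_set_sub:
  fixes S :: "('a \<times> nat) set"
  shows "{v \<in> V. v \<notin> Vj V mu I X 0 \<and> nu \<le> n_reached mu X (\<lambda>i. I i \<union> comp S i) v}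
     \<subseteq> (reach X (fst ` S) \<inter> (\<Union>j\<in>{1..nu - 1}. Vj V mu I X j)) \<union> (\<Union>j\<in>{nu..mu}. Vj V mu I X j)"
  (is "?L \<subseteq> (?R \<inter> ?B) \<union> ?A")
  proof
    fix v assume v: "v \<in> {v \<in> V. v \<notin> Vj V mu I X 0 \<and> nu \<le> n_reached mu X (\<lambda>i. I i \<union> comp S i) v}"
    have vV: "v \<in> V" using v by simp
    have "v \<notin> Vj V mu I X 0" using v by simp
    then have n0: "n_reached mu X I v \<noteq> 0" using vV by (simp add: Vj_def)
    have le: "n_reached mu X I v \<le> mu" by (rule n_reached_le)
    show "v \<in> (?R \<inter> ?B) \<union> ?A"
    proof (cases "v \<in> reach X (fst ` S)")
      case True
      show ?thesis
      proof (cases "n_reached mu X I v \<le> nu - 1")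
        case True
        then have "n_reached mu X I v \<in> {1..nu - 1}" using n0 by simp
        then have "v \<in> ?B" by (rule UN_I) (simp add: Vj_def vV)
        then show ?thesis by (rule UnI1[OF IntI[OF \<open>v \<in> reach X (fst ` S)\<close>]])
      next
        case False
        then have "n_reached mu X I v \<in> {nu..mu}" using le by simp
        then have "v \<in> ?A" by (rule UN_I) (simp add: Vj_def vV)
        then show ?thesis by (rule UnI2)
      qed
    next
      case False
      have "comp S i \<subseteq> fst ` S" for i unfolding comp_def by force
      then have RS: "reach X (comp S i) \<subseteq> reach X (fst ` S)" for i by (rule reach_mono)
      have "n_reached mu X (\<lambda>i. I i \<union> comp S i) v = n_reached mu X I v"
      proof (rule n_reached_same)
        fix i
        show "(v \<in> reach X (I i \<union> comp S i)) = (v \<in> reach X (I i))"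
          using RS[of i] False unfolding reach_Un by blast
      qed
      moreover have "nu \<le> n_reached mu X (\<lambda>i. I i \<union> comp S i) v" using v by simp
      ultimately have "n_reached mu X I v \<in> {nu..mu}" using le by simp
      then have "v \<in> ?A" by (rule UN_I) (simp add: Vj_def vV)
      then show ?thesis by (rule UnI2)
    qed
  qed

lemma Phi1_set_eq:
  fixes T :: "('a \<times> nat) set"
  assumes "nu \<le> mu" "1 \<le> nu" "T \<subseteq> V \<times> {0}"
  shows "{v \<in> V. v \<notin> Vj V mu I X 0 \<and> nu \<le> n_reached mu X (\<lambda>i. I i \<union> comp {(v, j). (v, 0) \<in> T \<and> j \<in> {1..nu}} i) v}
     = (reach X (fst ` T) \<inter> (\<Union>j\<in>{1..nu - 1}. Vj V mu I X j)) \<union> (\<Union>j\<in>{nu..mu}. Vj V mu I X j)"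
  (is "?L = (?R \<inter> ?B) \<union> ?A")
proof -
  let ?S = "{(v, j). (v, 0) \<in> T \<and> j \<in> {1..nu}}"
  have compS: "comp ?S i = (if i \<in> {1..nu} then fst ` T else {})" for i
  proof -
    have "fst ` T = {v. (v,0) \<in> T}" using assms(3) by force
    then show ?thesis by (auto simp: comp_def)
  qed
  show ?thesis
  proof (intro set_eqI iffI)
    fix v assume v: "v \<in> {v \<in> V. v \<notin> Vj V mu I X 0 \<and> nu \<le> n_reached mu X (\<lambda>i. I i \<union> comp ?S i) v}"
    have vV: "v \<in> V" using v by simp
    have "v \<notin> Vj V mu I X 0" using v by simp
    then have n0: "n_reached mu X I v \<noteq> 0" using vV by (simp add: Vj_def)
    have le: "n_reached mu X I v \<le> mu" by (rule n_reached_le)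
    show "v \<in> (?R \<inter> ?B) \<union> ?A"
    proof (cases "v \<in> ?R")
      case True
      show ?thesis
      proof (cases "n_reached mu X I v \<le> nu - 1")
        case True
        then have "n_reached mu X I v \<in> {1..nu - 1}" using n0 by simp
        then have "v \<in> ?B" by (rule UN_I) (simp add: Vj_def vV)
        then show ?thesis by (rule UnI1[OF IntI[OF \<open>v \<in> ?R\<close>]])
      next
        case False
        then have "n_reached mu X I v \<in> {nu..mu}" using le by simp
        then have "v \<in> ?A" by (rule UN_I) (simp add: Vj_def vV)
        then show ?thesis by (rule UnI2)
      qed
    next
      case False
      have RS: "reach X (comp ?S i) \<subseteq> ?R" for i
        unfolding compS by (cases "i \<in> {1..nu}") (auto simp: reach_def)
      have "n_reached mu X (\<lambda>i. I i \<union> comp ?S i) v = n_reached mu X I v"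
      proof (rule n_reached_same)
        fix i
        show "(v \<in> reach X (I i \<union> comp ?S i)) = (v \<in> reach X (I i))"
          using RS[of i] False unfolding reach_Un by blast
      qed
      moreover have "nu \<le> n_reached mu X (\<lambda>i. I i \<union> comp ?S i) v" using v by simp
      ultimately have "n_reached mu X I v \<in> {nu..mu}" using le by simp
      then have "v \<in> ?A" by (rule UN_I) (simp add: Vj_def vV)
      then show ?thesis by (rule UnI2)
    qed
  next
    fix v assume v: "v \<in> (?R \<inter> ?B) \<union> ?A"
    have vV: "v \<in> V" using v by (auto simp: Vj_def)
    have le: "n_reached mu X I v \<le> mu" by (rule n_reached_le)
    show "v \<in> {v \<in> V. v \<notin> Vj V mu I X 0 \<and> nu \<le> n_reached mu X (\<lambda>i. I i \<union> comp ?S i) v}"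
    proof (cases "v \<in> ?A")
      case True
      then obtain j where j: "j \<in> {nu..mu}" "v \<in> Vj V mu I X j" by (rule UN_E)
      then have nu: "nu \<le> n_reached mu X I v" by (simp add: Vj_def)
      have "n_reached mu X I v \<le> n_reached mu X (\<lambda>i. I i \<union> comp ?S i) v"
        unfolding n_reached_def by (rule card_mono) (auto simp: reach_Un)
      moreover have "n_reached mu X I v \<noteq> 0" using nu assms(2) by simp
      ultimately show ?thesis using nu vV by (simp add: Vj_def)
    next
      case False
      have vRB: "v \<in> ?R \<inter> ?B" using v False by (meson UnE)
      then have vR: "v \<in> ?R" by (rule IntD1)
      from vRB have vB: "v \<in> ?B" by (rule IntD2)
      then obtain j where j: "j \<in> {1..nu - 1}" "v \<in> Vj V mu I X j" by (rule UN_E)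
      then have n0: "n_reached mu X I v \<noteq> 0" by (simp add: Vj_def)
      have "{1..nu} \<subseteq> {i \<in> {1..mu}. v \<in> reach X (I i \<union> comp ?S i)}"
      proof
        fix i assume i: "i \<in> {1..nu}"
        then have ci: "comp ?S i = fst ` T" using compS[of i] by simp
        have "v \<in> reach X (I i \<union> comp ?S i)" unfolding reach_Un ci using vR by blast
        moreover have "i \<in> {1..mu}" using i assms(1) by simp
        ultimately show "i \<in> {i \<in> {1..mu}. v \<in> reach X (I i \<union> comp ?S i)}" by simp
      qed
      then have "card {1..nu} \<le> n_reached mu X (\<lambda>i. I i \<union> comp ?S i) v"
        unfolding n_reached_def by (rule card_mono[rotated]) auto
      then show ?thesis using n0 vV by (simp add: Vj_def)
    qed
  qed
qed

lemma Phi1_le_Psi: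
  fixes S :: "('a \<times> nat) set"
  assumes "finite V" "\<forall>e\<in>E. 0 \<le> p e \<and> p e \<le> 1"
  shows "Phi1 V E p mu nu I S \<le> Psi V E p mu nu I (fst ` S \<times> {0::nat})"
proof -
  have e: "fst ` (fst ` S \<times> {0::nat}) = fst ` S" by auto
  show ?thesis
    unfolding Phi1_def Psi_def e
    apply (rule expect_mono[OF assms(2)])
    apply (subst of_nat_le_iff)
    apply (rule card_mono)
     apply (rule finite_subset[OF _ assms(1)])
     apply (auto simp: Vj_def)[1]
    apply (rule Phi1_set_sub)
    done
qed

lemma Phi1_eq_Psi:
  fixes T :: "('a \<times> nat) set"
  assumes "nu \<le> mu" "1 \<le> nu" "T \<subseteq> V \<times> {0}"
  shows "Phi1 V E p mu nu I {(v, j). (v, 0) \<in> T \<and> j \<in> {1..nu}} = Psi V E p mu nu I T"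
  unfolding Phi1_def Psi_def Phi1_set_eq[OF assms] ..

lemma arith_bound:
  fixes k nu q :: nat and e :: real
  assumes "1 \<le> nu" "0 < e" "e < 1" "real nu / e \<le> real k" "q = k div nu" "1 \<le> q"
  shows "(1 - e) * real (k div q + 1) \<le> real nu + 1"
proof -
  define K where "K = real k"
  define Q where "Q = real q"
  define N where "N = real nu"
  define M where "M = real (k div q + 1)"
  have h1: "N \<le> e * K" using assms(2,4) unfolding K_def N_def
    by (simp add: divide_le_eq mult.commute)
  have "(k div q) * q \<le> k" by simp
  then have "(k div q + 1) * q \<le> k + q" by simp
  then have "real ((k div q + 1) * q) \<le> real (k + q)" by (rule of_nat_mono)
  then have h2: "M * Q \<le> K + Q" unfolding M_def Q_def K_def by (simp only: of_nat_mult of_nat_add of_nat_1)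
  have "k = q * nu + k mod nu" using assms(5) by simp
  moreover have "k mod nu < nu" using assms(1) by simp
  ultimately have "k \<le> q * nu + nu" by linarith
  then have "real k \<le> real (q * nu + nu)" by (rule of_nat_mono)
  then have h3: "K - N \<le> Q * N" unfolding K_def Q_def N_def by simp
  have "q * nu \<le> k" using assms(5) by simp
  then have "real (q * nu) \<le> real k" by (rule of_nat_mono)
  then have h4: "N * Q \<le> K" unfolding K_def Q_def N_def by (simp add: mult.commute)
  have "0 < e * K" using h1 assms(1) unfolding N_def by linarith
  then have Kpos: "0 < K" using assms(2) by (simp add: zero_less_mult_iff)
  have Qpos: "0 < Q" using assms(6) unfolding Q_def by simp
  have Npos: "0 \<le> N" unfolding N_def by simp
  have "(1 - e) * M * (K * Q) = ((1 - e) * K) * (M * Q)" by (simp add: algebra_simps)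
  also have "\<dots> \<le> ((1 - e) * K) * (K + Q)"
    by (rule mult_left_mono[OF h2]) (use assms(3) Kpos in simp)
  also have "\<dots> \<le> (K - N) * (K + Q)"
    by (rule mult_right_mono) (use h1 Kpos Qpos in \<open>simp_all add: algebra_simps\<close>)
  also have "\<dots> \<le> (Q * N) * (K + Q)"
    by (rule mult_right_mono[OF h3]) (use Kpos Qpos in simp)
  also have "\<dots> = Q * (N * K + N * Q)" by (simp add: algebra_simps)
  also have "\<dots> \<le> Q * (N * K + K)"
    by (rule mult_left_mono) (use h4 Qpos in simp_all)
  also have "\<dots> = (N + 1) * (K * Q)" by (simp add: algebra_simps)
  finally have "(1 - e) * M * (K * Q) \<le> (N + 1) * (K * Q)" .
  then have "(1 - e) * M \<le> N + 1" using Kpos Qpos by simp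
  then show ?thesis unfolding M_def N_def .
qed


theorem mainTheorem12:
  fixes V :: "'a set" and E :: "('a \<times> 'a) set" and p :: "'a \<times> 'a \<Rightarrow> real"
    and I :: "nat \<Rightarrow> 'a set" and mu nu k :: nat
  assumes "finite V" and "E \<subseteq> V \<times> V"
    and "\<forall>e\<in>E. 0 \<le> p e \<and> p e \<le> 1"
    and "\<forall>i\<in>{1..mu}. I i \<subseteq> V"
    and "2 \<le> nu" and "nu \<le> mu" and "2 \<le> k"
  shows
   "(\<forall>Tk Sk. Tk \<subseteq> V \<times> {0} \<and> card Tk = k
        \<and> (\<forall>T. T \<subseteq> V \<times> {0} \<and> card T = k \<longrightarrow> Psi V E p mu nu I T \<le> Psi V E p mu nu I Tk)
        \<and> Sk \<subseteq> V \<times> {1..mu} \<and> card Sk = k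
        \<and> (\<forall>S. S \<subseteq> V \<times> {1..mu} \<and> card S = k \<longrightarrow> Phi1 V E p mu nu I S \<le> Phi1 V E p mu nu I Sk)
      \<longrightarrow> Psi V E p mu nu I Tk \<ge> Phi1 V E p mu nu I Sk)
    \<and> (\<forall>(\<epsilon>::real) Tk Tq. \<epsilon> > 0 \<and> real k \<ge> real nu / \<epsilon>
        \<and> Tk \<subseteq> V \<times> {0} \<and> card Tk = k
        \<and> (\<forall>T. T \<subseteq> V \<times> {0} \<and> card T = k \<longrightarrow> Psi V E p mu nu I T \<le> Psi V E p mu nu I Tk)
        \<and> Tq \<subseteq> V \<times> {0} \<and> card Tq = k div nu
        \<and> (\<forall>T. T \<subseteq> V \<times> {0} \<and> card T = k div nu \<longrightarrow> Psi V E p mu nu I T \<le> Psi V E p mu nu I Tq)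
      \<longrightarrow> Psi V E p mu nu I Tq \<ge> (1 - \<epsilon>) / (real nu + 1) * Psi V E p mu nu I Tk)
    \<and> (\<forall>T. T \<subseteq> V \<times> {0} \<and> card T = k div nu \<longrightarrow>
        (let S' = {(v, j). (v, 0) \<in> T \<and> j \<in> {1..nu}} in
          S' \<subseteq> V \<times> {1..mu} \<and> card S' \<le> k \<and> Phi1 V E p mu nu I S' = Psi V E p mu nu I T))"
proof -
  note pr = assms(3)
  have finV0: "finite (V \<times> {0::nat})" using assms(1) by simp
  have cardV0: "card (V \<times> {0::nat}) = card V" by (simp add: card_cartesian_product)
  have P1: "\<forall>Tk Sk. Tk \<subseteq> V \<times> {0} \<and> card Tk = k
        \<and> (\<forall>T. T \<subseteq> V \<times> {0} \<and> card T = k \<longrightarrow> Psi V E p mu nu I T \<le> Psi V E p mu nu I Tk)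
        \<and> Sk \<subseteq> V \<times> {1..mu} \<and> card Sk = k
        \<and> (\<forall>S. S \<subseteq> V \<times> {1..mu} \<and> card S = k \<longrightarrow> Phi1 V E p mu nu I S \<le> Phi1 V E p mu nu I Sk)
      \<longrightarrow> Psi V E p mu nu I Tk \<ge> Phi1 V E p mu nu I Sk"
  proof (intro allI impI)
    fix Tk :: "('a \<times> nat) set" and Sk :: "('a \<times> nat) set"
    assume H: "Tk \<subseteq> V \<times> {0} \<and> card Tk = k
        \<and> (\<forall>T. T \<subseteq> V \<times> {0} \<and> card T = k \<longrightarrow> Psi V E p mu nu I T \<le> Psi V E p mu nu I Tk)
        \<and> Sk \<subseteq> V \<times> {1..mu} \<and> card Sk = k
        \<and> (\<forall>S. S \<subseteq> V \<times> {1..mu} \<and> card S = k \<longrightarrow> Phi1 V E p mu nu I S \<le> Phi1 V E p mu nu I Sk)"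
    have Tk0: "Tk \<subseteq> V \<times> {0}" and cTk: "card Tk = k"
      and optT: "\<forall>T. T \<subseteq> V \<times> {0} \<and> card T = k \<longrightarrow> Psi V E p mu nu I T \<le> Psi V E p mu nu I Tk"
      and Sk1: "Sk \<subseteq> V \<times> {1..mu}" and cSk: "card Sk = k"
      using H by blast+
    have "card Tk \<le> card (V \<times> {0::nat})" by (rule card_mono[OF finV0]) (use Tk0 in blast)
    then have kV: "k \<le> card (V \<times> {0::nat})" using cTk by simp
    have finS: "finite Sk" by (rule finite_subset[of _ "V \<times> {1..mu}"]) (use Sk1 assms(1) in simp_all)
    let ?T' = "fst ` Sk \<times> {0::nat}"
    have cT': "card ?T' \<le> k"
      using cSk card_image_le[OF finS, of fst] by (simp add: card_cartesian_product)
    have sT': "?T' \<subseteq> V \<times> {0}" using Sk1 by auto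
    obtain T'' where T'': "?T' \<subseteq> T''" "T'' \<subseteq> V \<times> {0}" "card T'' = k"
      using exists_subset_between[OF cT' kV sT' finV0] by blast
    have "Phi1 V E p mu nu I Sk \<le> Psi V E p mu nu I ?T'"
      by (rule Phi1_le_Psi[OF assms(1) pr])
    also have "\<dots> \<le> Psi V E p mu nu I T''"
      by (rule Psi_mono[OF assms(1) pr]) (use T''(1) in blast)
    also have "\<dots> \<le> Psi V E p mu nu I Tk" using optT T'' by blast
    finally show "Psi V E p mu nu I Tk \<ge> Phi1 V E p mu nu I Sk" .
  qed
  have P2: "\<forall>(\<epsilon>::real) Tk Tq. \<epsilon> > 0 \<and> real k \<ge> real nu / \<epsilon>
        \<and> Tk \<subseteq> V \<times> {0} \<and> card Tk = k
        \<and> (\<forall>T. T \<subseteq> V \<times> {0} \<and> card T = k \<longrightarrow> Psi V E p mu nu I T \<le> Psi V E p mu nu I Tk)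
        \<and> Tq \<subseteq> V \<times> {0} \<and> card Tq = k div nu
        \<and> (\<forall>T. T \<subseteq> V \<times> {0} \<and> card T = k div nu \<longrightarrow> Psi V E p mu nu I T \<le> Psi V E p mu nu I Tq)
      \<longrightarrow> Psi V E p mu nu I Tq \<ge> (1 - \<epsilon>) / (real nu + 1) * Psi V E p mu nu I Tk"
  proof (intro allI impI)
    fix e :: real and Tk Tq :: "('a \<times> nat) set"
    assume H: "e > 0 \<and> real k \<ge> real nu / e
        \<and> Tk \<subseteq> V \<times> {0} \<and> card Tk = k
        \<and> (\<forall>T. T \<subseteq> V \<times> {0} \<and> card T = k \<longrightarrow> Psi V E p mu nu I T \<le> Psi V E p mu nu I Tk)
        \<and> Tq \<subseteq> V \<times> {0} \<and> card Tq = k div nu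
        \<and> (\<forall>T. T \<subseteq> V \<times> {0} \<and> card T = k div nu \<longrightarrow> Psi V E p mu nu I T \<le> Psi V E p mu nu I Tq)"
    have e0: "e > 0" and ek: "real k \<ge> real nu / e" and Tk0: "Tk \<subseteq> V \<times> {0}" and cTk: "card Tk = k"
      and Tq0: "Tq \<subseteq> V \<times> {0}" and cTq: "card Tq = k div nu"
      and optq: "\<forall>T. T \<subseteq> V \<times> {0} \<and> card T = k div nu \<longrightarrow> Psi V E p mu nu I T \<le> Psi V E p mu nu I Tq"
      using H by blast+
    have PTk: "0 \<le> Psi V E p mu nu I Tk" by (rule Psi_nonneg[OF pr])
    have PTq: "0 \<le> Psi V E p mu nu I Tq" by (rule Psi_nonneg[OF pr])
    show "Psi V E p mu nu I Tq \<ge> (1 - e) / (real nu + 1) * Psi V E p mu nu I Tk"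
    proof (cases "1 \<le> e")
      case True
      have "(1 - e) / (real nu + 1) * Psi V E p mu nu I Tk \<le> 0"
        by (rule mult_nonpos_nonneg) (use True PTk in \<open>simp_all add: divide_nonpos_pos\<close>)
      then show ?thesis using PTq by linarith
    next
      case False
      define q where "q = k div nu"
      have "card Tk \<le> card (V \<times> {0::nat})" by (rule card_mono[OF finV0]) (use Tk0 in blast)
      then have kV: "k \<le> card (V \<times> {0::nat})" using cTk by simp
      have "real nu < real nu / e" using False e0 assms(5)
        by (simp add: less_divide_eq)
      then have "nu < k" using ek by linarith
      have "nu div nu \<le> k div nu" by (rule div_le_mono) (use \<open>nu < k\<close> in simp)
      then have q1: "1 \<le> q" unfolding q_def using assms(5) by simp
      have finT: "finite Tk" by (rule finite_subset[OF _ finV0]) (use Tk0 in blast)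
      have "\<exists>h. bij_betw h {0..<card Tk} Tk" by (rule ex_bij_betw_nat_finite[OF finT])
      then obtain g where g: "bij_betw g {0..<k} Tk" using cTk by auto
      define P where "P i = g ` {j. j < k \<and> j div q = i}" for i
      define m where "m = k div q + 1"
      have cover: "fst ` Tk \<subseteq> (\<Union>i\<in>{..<m}. fst ` P i)"
      proof
        fix x assume "x \<in> fst ` Tk"
        then obtain y where y: "y \<in> Tk" "x = fst y" by blast
        then obtain j where j: "j < k" "y = g j" using g unfolding bij_betw_def by auto
        have "j div q < m" unfolding m_def using j(1) div_le_mono[of j k q] by simp
        moreover have "y \<in> P (j div q)" unfolding P_def using j by blast
        ultimately show "x \<in> (\<Union>i\<in>{..<m}. fst ` P i)" using y by blast
      qed
      have "Psi V E p mu nu I Tk \<le> (\<Sum>i\<in>{..<m}. Psi V E p mu nu I (P i))"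
        by (rule Psi_cover[OF assms(1) pr _ _ cover]) (simp_all add: m_def lessThan_empty_iff)
      also have "\<dots> \<le> (\<Sum>i\<in>{..<m}. Psi V E p mu nu I Tq)"
      proof (rule sum_mono)
        fix i
        have "{j. j < k \<and> j div q = i} \<subseteq> {i * q..<i * q + q}"
        proof
          fix j assume "j \<in> {j. j < k \<and> j div q = i}"
          then have "j div q = i" by simp
          moreover have "j = j div q * q + j mod q" by simp
          moreover have "j mod q < q" using q1 by simp
          ultimately show "j \<in> {i * q..<i * q + q}" by auto
        qed
        then have "card {j. j < k \<and> j div q = i} \<le> q"
          using card_mono[of "{i * q..<i * q + q}"] by fastforce
        then have cP: "card (P i) \<le> q" unfolding P_def
          using card_image_le[of "{j. j < k \<and> j div q = i}" g] by simp
        have "P i \<subseteq> g ` {0..<k}" unfolding P_def by auto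
        also have "\<dots> = Tk" using g unfolding bij_betw_def by simp
        finally have sP: "P i \<subseteq> V \<times> {0}" using Tk0 by (rule subset_trans)
        have qk: "q \<le> card (V \<times> {0::nat})" using kV unfolding q_def
          by (meson div_le_dividend le_trans)
        obtain P' where P': "P i \<subseteq> P'" "P' \<subseteq> V \<times> {0}" "card P' = q"
          using exists_subset_between[OF cP qk sP finV0] by blast
        have "Psi V E p mu nu I (P i) \<le> Psi V E p mu nu I P'"
          by (rule Psi_mono[OF assms(1) pr]) (use P'(1) in blast)
        also have "\<dots> \<le> Psi V E p mu nu I Tq" using optq P' unfolding q_def by blast
        finally show "Psi V E p mu nu I (P i) \<le> Psi V E p mu nu I Tq" .
      qed
      also have "\<dots> = real m * Psi V E p mu nu I Tq" by simp
      finally have main: "Psi V E p mu nu I Tk \<le> real m * Psi V E p mu nu I Tq" .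
      have ab: "(1 - e) * real m \<le> real nu + 1" unfolding m_def
        by (rule arith_bound[of nu e k q]) (use e0 ek False assms(5) q1 q_def in auto)
      have c0: "0 \<le> (1 - e) / (real nu + 1)" using False by simp
      have "(1 - e) / (real nu + 1) * Psi V E p mu nu I Tk
          \<le> (1 - e) / (real nu + 1) * (real m * Psi V E p mu nu I Tq)"
        by (rule mult_left_mono[OF main c0])
      also have "\<dots> = ((1 - e) * real m) / (real nu + 1) * Psi V E p mu nu I Tq" by simp
      also have "\<dots> \<le> 1 * Psi V E p mu nu I Tq"
        by (rule mult_right_mono[OF _ PTq]) (use ab in simp)
      finally show ?thesis by simp
    qed
  qed
  have P3: "\<forall>T. T \<subseteq> V \<times> {0} \<and> card T = k div nu \<longrightarrow>
        (let S' = {(v, j). (v, 0) \<in> T \<and> j \<in> {1..nu}} in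
          S' \<subseteq> V \<times> {1..mu} \<and> card S' \<le> k \<and> Phi1 V E p mu nu I S' = Psi V E p mu nu I T)"
  proof (intro allI impI)
    fix T :: "('a \<times> nat) set"
    assume H: "T \<subseteq> V \<times> {0} \<and> card T = k div nu"
    let ?S = "{(v, j). (v, 0) \<in> T \<and> j \<in> {1..nu}}"
    have S1: "?S \<subseteq> V \<times> {1..mu}" using H assms(6) by auto
    have eqS: "?S = {v. (v, 0) \<in> T} \<times> {1..nu}" by auto
    have fT: "finite T" by (rule finite_subset[OF _ finV0]) (use H in blast)
    have "{v. (v, 0) \<in> T} = fst ` T" using H by force
    then have "card {v. (v, 0) \<in> T} \<le> card T" using card_image_le[OF fT, of fst] by simp
    then have "card ?S \<le> (k div nu) * nu" unfolding eqS using H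
      by (simp add: card_cartesian_product)
    also have "\<dots> \<le> k" by simp
    finally have S2: "card ?S \<le> k" .
    have S3: "Phi1 V E p mu nu I ?S = Psi V E p mu nu I T"
      by (rule Phi1_eq_Psi) (use assms(5,6) H in auto)
    show "let S' = ?S in S' \<subseteq> V \<times> {1..mu} \<and> card S' \<le> k \<and> Phi1 V E p mu nu I S' = Psi V E p mu nu I T"
      using S1 S2 S3 by simp
  qed
  show ?thesis using P1 P2 P3 by blast
qed

end
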